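(* For the CRF surrogate with decoding $d$ described in the context, the calibration function satisfies, for all $\varepsilon\ge0$, $$\zeta(\varepsilon)\ge\frac{\varepsilon^2}{8\,c_{\psi}^2\,c_{\phi}^2},\qquad c_\psi=\max_{z\in\mathcal{Z}}\|\psi(z)\|_2,\quad c_\phi=\max_{y\in\mathcal{Y}}\|\phi(y)\|_2 .$$
   Context: $\mathcal{Y},\mathcal{Z}$ finite sets, $\mathcal{H}$ a finite-dimensional real Euclidean space, $\psi:\mathcal{Z}\to\mathcal{H}$, $\phi:\mathcal{Y}\to\mathcal{H}$, $c\in\mathbb{R}$, $L(z,y)=\langle\psi(z),\phi(y)\rangle+c$. For $q\in\operatorname{Prob}(\mathcal{Y})$: $\mu(q)=\sum_y q(y)\phi(y)$, $\ell(z,q)=\mathbb{E}_{Y\sim q}L(z,Y)$, $\delta\ell(z,q)=\ell(z,q)-\min_{z'}\ell(z',q)$. The CRF surrogate is $S(v,y)=\log\sum_{y'\in\mathcal{Y}}\exp\langle v,\phi(y')\rangle-\langle v,\phi(y)\rangle$ for $v\in\mathcal{V}=\mathcal{H}$; $s(v,q)=\mathbb{E}_{Y\sim q}S(v,Y)$, $\delta s(v,q)=s(v,q)-\inf_{v'}s(v',q)$. For $v\in\mathcal{H}$ let $p_v(y)=\exp\langle\phi(y),v\rangle/\sum_{y'}\exp\langle\phi(y'),v\rangle$ and $m(v)=\sum_y p_v(y)\phi(y)$ (the marginals). The decoding is $d(v)$ = an element of $\arg\min_{z\in\mathcal{Z}}\langle\psi(z),m(v)\rangle$ (fixed tie-breaking).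 The calibration function is $\zeta(\varepsilon)=\inf\{\delta s(v,q):v\in\mathcal{H},q\in\operatorname{Prob}(\mathcal{Y}),\delta\ell(d(v),q)\ge\varepsilon\}$ ($\inf\emptyset=+\infty$). *)

theory Defs
  imports "HOL-Analysis.Analysis" "HOL-Library.Extended_Real"
begin

text \<open>Y = 'y, Z = 'z finite types; H = 'h a finite-dimensional real Euclidean space.
  Prob(Y) = nonnegative functions 'y => real summing to 1.\<close>

definition is_prob :: "('y::finite \<Rightarrow> real) \<Rightarrow> bool" where
  "is_prob q \<longleftrightarrow> (\<forall>y. 0 \<le> q y) \<and> (\<Sum>y\<in>UNIV. q y) = 1"

definition task_loss :: "('z \<Rightarrow> 'h::euclidean_space) \<Rightarrow> ('y \<Rightarrow> 'h) \<Rightarrow> real \<Rightarrow> 'z \<Rightarrow> 'y \<Rightarrow> real" where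
  "task_loss \<psi> \<phi> c z y = inner (\<psi> z) (\<phi> y) + c"

definition cond_loss :: "('z \<Rightarrow> 'h::euclidean_space) \<Rightarrow> ('y::finite \<Rightarrow> 'h) \<Rightarrow> real \<Rightarrow> 'z \<Rightarrow> ('y \<Rightarrow> real) \<Rightarrow> real" where
  "cond_loss \<psi> \<phi> c z q = (\<Sum>y\<in>UNIV. q y * task_loss \<psi> \<phi> c z y)"

definition excess_loss :: "('z::finite \<Rightarrow> 'h::euclidean_space) \<Rightarrow> ('y::finite \<Rightarrow> 'h) \<Rightarrow> real \<Rightarrow> 'z \<Rightarrow> ('y \<Rightarrow> real) \<Rightarrow> real" where
  "excess_loss \<psi> \<phi> c z q = cond_loss \<psi> \<phi> c z q - Min (range (\<lambda>z'. cond_loss \<psi> \<phi> c z' q))"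

definition crf_surrogate :: "('y::finite \<Rightarrow> 'h::euclidean_space) \<Rightarrow> 'h \<Rightarrow> 'y \<Rightarrow> real" where
  "crf_surrogate \<phi> v y = ln (\<Sum>y'\<in>UNIV. exp (inner v (\<phi> y'))) - inner v (\<phi> y)"

definition cond_surrogate :: "('y::finite \<Rightarrow> 'h::euclidean_space) \<Rightarrow> 'h \<Rightarrow> ('y \<Rightarrow> real) \<Rightarrow> real" where
  "cond_surrogate \<phi> v q = (\<Sum>y\<in>UNIV. q y * crf_surrogate \<phi> v y)"

definition excess_surrogate :: "('y::finite \<Rightarrow> 'h::euclidean_space) \<Rightarrow> 'h \<Rightarrow> ('y \<Rightarrow> real) \<Rightarrow> real" where
  "excess_surrogate \<phi> v q = cond_surrogate \<phi> v q - (INF v'. cond_surrogate \<phi> v' q)"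

definition crf_prob :: "('y::finite \<Rightarrow> 'h::euclidean_space) \<Rightarrow> 'h \<Rightarrow> 'y \<Rightarrow> real" where
  "crf_prob \<phi> v y = exp (inner (\<phi> y) v) / (\<Sum>y'\<in>UNIV. exp (inner (\<phi> y') v))"

definition marginals :: "('y::finite \<Rightarrow> 'h::euclidean_space) \<Rightarrow> 'h \<Rightarrow> 'h" where
  "marginals \<phi> v = (\<Sum>y\<in>UNIV. crf_prob \<phi> v y *\<^sub>R \<phi> y)"

definition is_decoding :: "('z::finite \<Rightarrow> 'h::euclidean_space) \<Rightarrow> ('y::finite \<Rightarrow> 'h) \<Rightarrow> ('h \<Rightarrow> 'z) \<Rightarrow> bool" where
  "is_decoding \<psi> \<phi> d \<longleftrightarrow>
     (\<forall>v z. inner (\<psi> (d v)) (marginals \<phi> v) \<le> inner (\<psi> z) (marginals \<phi> v))"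

text \<open>Calibration function, valued in extended reals (Inf of empty set = +infinity).\<close>
definition calibration :: "('z::finite \<Rightarrow> 'h::euclidean_space) \<Rightarrow> ('y::finite \<Rightarrow> 'h) \<Rightarrow> real \<Rightarrow> ('h \<Rightarrow> 'z) \<Rightarrow> real \<Rightarrow> ereal" where
  "calibration \<psi> \<phi> c d \<epsilon> =
     Inf {ereal (excess_surrogate \<phi> v q) | v q. is_prob q \<and> excess_loss \<psi> \<phi> c (d v) q \<ge> \<epsilon>}"

end

theory Submission imports Defs "HOL-Probability.Hoeffding" begin

lemma exp_chord:
  fixes B x t :: real
  assumes "B > 0" "\<bar>x\<bar> \<le> B" "t \<ge> 0"
  shows "exp (t * x) \<le> (B - x) / (2*B) * exp (- (t*B)) + (B + x) / (2*B) * exp (t*B)"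
proof -
  define u where "u = (B + x) / (2*B)"
  have u: "0 \<le> u" "u \<le> 1" using assms by (auto simp: u_def field_simps)
  have "exp (t * ((1 - u) *\<^sub>R (-B) + u *\<^sub>R B)) \<le> (1 - u) * exp (t * (-B)) + u * exp (t * B)"
    using convex_onD[OF convex_on_exp[OF assms(3)], of u "-B" B] u by simp
  moreover have "(1 - u) *\<^sub>R (-B) + u *\<^sub>R B = x" using assms by (simp add: u_def field_simps)
  moreover have "1 - u = (B - x) / (2*B)" using assms by (simp add: u_def field_simps)
  ultimately show ?thesis by (simp add: u_def)
qed

lemma hoeff_fin:
  fixes p X :: "'y::finite \<Rightarrow> real"
  assumes p0: "\<And>y. p y \<ge> 0" and p1: "(\<Sum>y\<in>UNIV. p y) = 1"
    and XB: "\<And>y. \<bar>X y\<bar> \<le> B" and t: "t \<ge> 0"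
  shows "(\<Sum>y\<in>UNIV. p y * exp (t * X y)) \<le> exp (t * (\<Sum>y\<in>UNIV. p y * X y) + t\<^sup>2 * B\<^sup>2 / 2)"
proof (cases "B = 0")
  case True
  then have "\<And>y. X y = 0" using XB by (metis abs_le_zero_iff)
  then show ?thesis using p1 by simp
next
  case False
  then have B: "B > 0" using XB[of undefined] by linarith
  define m where "m = (\<Sum>y\<in>UNIV. p y * X y)"
  have mB: "\<bar>m\<bar> \<le> B"
  proof -
    have "\<bar>m\<bar> \<le> (\<Sum>y\<in>UNIV. \<bar>p y * X y\<bar>)" unfolding m_def by (rule sum_abs)
    also have "\<dots> \<le> (\<Sum>y\<in>UNIV. p y * B)"
      by (intro sum_mono) (simp add: abs_mult p0 mult_left_mono XB)
    also have "\<dots> = B" using p1 by (simp add: sum_distrib_right[symmetric])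
    finally show ?thesis .
  qed
  have "(\<Sum>y\<in>UNIV. p y * exp (t * X y)) \<le>
        (\<Sum>y\<in>UNIV. p y * ((B - X y) / (2*B) * exp (- (t*B)) + (B + X y) / (2*B) * exp (t*B)))"
    by (intro sum_mono mult_left_mono exp_chord B XB t p0)
  also have "\<dots> = (\<Sum>y\<in>UNIV. (p y * B - p y * X y)) / (2*B) * exp (- (t*B))
       + (\<Sum>y\<in>UNIV. (p y * B + p y * X y)) / (2*B) * exp (t*B)"
    unfolding sum_divide_distrib sum_distrib_right sum.distrib[symmetric]
    by (intro sum.cong refl) (use B in \<open>simp add: field_simps\<close>)
  also have "\<dots> = (B - m) / (2*B) * exp (- (t*B)) + (B + m) / (2*B) * exp (t*B)"
    by (simp add: sum_subtractf sum.distrib m_def sum_distrib_right[symmetric] p1)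
  also have "\<dots> = exp (- (t*B)) * (1 + (B + m) / (2*B) * (exp (2*t*B) - 1))"
    using B by (simp add: field_simps exp_add[symmetric] mult_exp_exp)
  finally have 1: "(\<Sum>y\<in>UNIV. p y * exp (t * X y)) \<le> exp (- (t*B)) * (1 + (B + m) / (2*B) * (exp (2*t*B) - 1))" .
  define \<pi> where "\<pi> = (B + m) / (2*B)"
  have pi0: "\<pi> \<ge> 0" using B mB by (simp add: \<pi>_def)
  have pos: "1 + \<pi> * (exp (2*t*B) - 1) > 0"
    using pi0 B t by (intro add_pos_nonneg mult_nonneg_nonneg) auto
  have H: "- (2*t*B) * \<pi> + ln (1 + \<pi> * (exp (2*t*B) - 1)) \<le> (2*t*B)\<^sup>2 / 8"
    using Hoeffdings_lemma_aux[of "2*t*B" \<pi>] pi0 B t by simp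
  have "exp (- (t*B)) * (1 + \<pi> * (exp (2*t*B) - 1)) = exp (- (t*B) + ln (1 + \<pi> * (exp (2*t*B) - 1)))"
    using pos by (simp only: exp_add exp_ln mult.commute)
  also have "\<dots> \<le> exp (- (t*B) + (2*t*B) * \<pi> + (2*t*B)\<^sup>2 / 8)"
    using H by simp
  also have "- (t*B) + (2*t*B) * \<pi> + (2*t*B)\<^sup>2 / 8 = t * m + t\<^sup>2 * B\<^sup>2 / 2"
    using B by (simp add: \<pi>_def field_simps power2_eq_square)
  finally show ?thesis using 1 by (simp add: \<pi>_def m_def)
qed


definition mu :: "('y::finite \<Rightarrow> 'h::euclidean_space) \<Rightarrow> ('y \<Rightarrow> real) \<Rightarrow> 'h" where
  "mu \<phi> q = (\<Sum>y\<in>UNIV. q y *\<^sub>R \<phi> y)"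

definition Zf :: "('y::finite \<Rightarrow> 'h::euclidean_space) \<Rightarrow> 'h \<Rightarrow> real" where
  "Zf \<phi> v = (\<Sum>y\<in>UNIV. exp (inner v (\<phi> y)))"

lemma Zf_pos: "Zf \<phi> v > 0"
  unfolding Zf_def by (intro sum_pos) auto

lemma inner_mu: "(\<Sum>y\<in>UNIV. q y * inner w (\<phi> y)) = inner w (mu \<phi> q)"
  by (simp add: mu_def inner_sum_right)

lemma cs_eq:
  assumes "is_prob q"
  shows "cond_surrogate \<phi> v q = ln (Zf \<phi> v) - inner v (mu \<phi> q)"
proof -
  have "cond_surrogate \<phi> v q = (\<Sum>y\<in>UNIV. q y * ln (Zf \<phi> v)) - (\<Sum>y\<in>UNIV. q y * inner v (\<phi> y))"
    unfolding cond_surrogate_def crf_surrogate_def Zf_def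
    by (simp add: right_diff_distrib sum_subtractf)
  also have "\<dots> = ln (Zf \<phi> v) - inner v (mu \<phi> q)"
    using assms by (simp add: inner_mu sum_distrib_right[symmetric] is_prob_def)
  finally show ?thesis .
qed

lemma crf_nonneg: "crf_surrogate \<phi> v y \<ge> 0"
proof -
  have "exp (inner v (\<phi> y)) \<le> (\<Sum>y'\<in>UNIV. exp (inner v (\<phi> y')))"
    by (rule member_le_sum) auto
  then have "ln (exp (inner v (\<phi> y))) \<le> ln (\<Sum>y'\<in>UNIV. exp (inner v (\<phi> y')))"
    by (subst ln_le_cancel_iff) (auto intro: sum_pos)
  then show ?thesis unfolding crf_surrogate_def by simp
qed

lemma cs_nonneg: "is_prob q \<Longrightarrow> cond_surrogate \<phi> v q \<ge> 0"
  unfolding cond_surrogate_def is_prob_def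
  by (intro sum_nonneg mult_nonneg_nonneg crf_nonneg) auto

lemma es_ge:
  assumes "is_prob q"
  shows "excess_surrogate \<phi> v q \<ge> cond_surrogate \<phi> v q - cond_surrogate \<phi> v' q"
proof -
  have "(INF v'. cond_surrogate \<phi> v' q) \<le> cond_surrogate \<phi> v' q"
    by (rule cINF_lower) (auto intro!: bdd_belowI[where m=0] cs_nonneg assms)
  then show ?thesis unfolding excess_surrogate_def by simp
qed

lemma norm_le_Max: "norm (f (x::'a::finite)) \<le> Max (range (\<lambda>x. norm (f x)))"
  by (rule Max_ge) auto

lemma key:
  fixes \<phi> :: "'y::finite \<Rightarrow> 'h::euclidean_space" and v :: 'h and q t
  assumes q: "is_prob q" and t: "t \<ge> 0"
  defines "g \<equiv> marginals \<phi> v - mu \<phi> q"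
  defines "C \<equiv> Max (range (\<lambda>y. norm (\<phi> y)))"
  shows "cond_surrogate \<phi> (v - t *\<^sub>R g) q \<le> cond_surrogate \<phi> v q - t * (norm g)\<^sup>2 + t\<^sup>2 * (C * norm g)\<^sup>2 / 2"
proof -
  define p where "p = crf_prob \<phi> v"
  define X where "X = (\<lambda>y. - inner g (\<phi> y))"
  have p0: "\<And>y. p y \<ge> 0" unfolding p_def crf_prob_def by (auto intro!: divide_nonneg_pos sum_pos)
  have p1: "(\<Sum>y\<in>UNIV. p y) = 1"
    unfolding p_def crf_prob_def using Zf_pos[of \<phi> v]
    by (simp add: sum_divide_distrib[symmetric] Zf_def inner_commute)
  have XB: "\<bar>X y\<bar> \<le> C * norm g" for y
  proof -
    have "\<bar>X y\<bar> \<le> norm g * norm (\<phi> y)" unfolding X_def using Cauchy_Schwarz_ineq2 by simp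
    also have "\<dots> \<le> norm g * C" unfolding C_def by (intro mult_left_mono norm_le_Max) auto
    finally show ?thesis by (simp add: mult.commute)
  qed
  have EX: "(\<Sum>y\<in>UNIV. p y * X y) = - inner g (marginals \<phi> v)"
    unfolding X_def p_def marginals_def by (simp add: inner_sum_right sum_negf)
  have Zeq: "Zf \<phi> (v - t *\<^sub>R g) = Zf \<phi> v * (\<Sum>y\<in>UNIV. p y * exp (t * X y))"
    unfolding Zf_def p_def crf_prob_def X_def sum_distrib_left
    using Zf_pos[of \<phi> v]
    by (intro sum.cong refl) (simp add: inner_diff_right inner_commute[of _ v] inner_commute[of _ g] mult_exp_exp Zf_def[symmetric] inner_diff_left)
  have "Zf \<phi> (v - t *\<^sub>R g) \<le> Zf \<phi> v * exp (t * (- inner g (marginals \<phi> v)) + t\<^sup>2 * (C * norm g)\<^sup>2 / 2)"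
    unfolding Zeq using hoeff_fin[of p X "C * norm g" t, OF p0 p1 XB t] EX Zf_pos[of \<phi> v]
    by (intro mult_left_mono) auto
  then have "ln (Zf \<phi> (v - t *\<^sub>R g)) \<le> ln (Zf \<phi> v * exp (t * (- inner g (marginals \<phi> v)) + t\<^sup>2 * (C * norm g)\<^sup>2 / 2))"
    using Zf_pos by (subst ln_le_cancel_iff) auto
  also have "\<dots> = ln (Zf \<phi> v) - t * inner g (marginals \<phi> v) + t\<^sup>2 * (C * norm g)\<^sup>2 / 2"
    using Zf_pos[of \<phi> v] by (simp add: ln_mult)
  finally have L: "ln (Zf \<phi> (v - t *\<^sub>R g)) \<le> ln (Zf \<phi> v) - t * inner g (marginals \<phi> v) + t\<^sup>2 * (C * norm g)\<^sup>2 / 2" .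
  have "inner g (marginals \<phi> v) - inner g (mu \<phi> q) = (norm g)\<^sup>2"
    unfolding g_def by (simp add: inner_diff_right power2_norm_eq_inner)
  then show ?thesis using L unfolding cs_eq[OF q] by (simp add: inner_diff_left algebra_simps)
qed


lemma cl_eq: "is_prob q \<Longrightarrow> cond_loss \<psi> \<phi> c z q = inner (\<psi> z) (mu \<phi> q) + c"
  unfolding cond_loss_def task_loss_def is_prob_def
  by (simp add: distrib_left sum.distrib inner_mu sum_distrib_right[symmetric])

lemma loss_bound:
  fixes \<psi> :: "'z::finite \<Rightarrow> 'h::euclidean_space" and \<phi> :: "'y::finite \<Rightarrow> 'h"
  assumes dec: "is_decoding \<psi> \<phi> d" and q: "is_prob q"
  shows "excess_loss \<psi> \<phi> c (d v) q \<le> 2 * Max (range (\<lambda>z. norm (\<psi> z))) * norm (marginals \<phi> v - mu \<phi> q)"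
proof -
  define f where "f = (\<lambda>z'. cond_loss \<psi> \<phi> c z' q)"
  have "Min (range f) \<in> range f" by (rule Min_in) auto
  then obtain zs where zs: "Min (range f) = f zs" by blast
  define m where "m = marginals \<phi> v"
  define cp where "cp = Max (range (\<lambda>z. norm (\<psi> z)))"
  have D: "inner (\<psi> (d v)) m \<le> inner (\<psi> zs) m" using dec unfolding is_decoding_def m_def by blast
  have "excess_loss \<psi> \<phi> c (d v) q = inner (\<psi> (d v)) (mu \<phi> q) - inner (\<psi> zs) (mu \<phi> q)"
    unfolding excess_loss_def f_def[symmetric] zs by (simp add: f_def cl_eq[OF q])
  also have "\<dots> \<le> inner (\<psi> (d v) - \<psi> zs) (mu \<phi> q - m)"
    using D by (simp add: inner_diff_left inner_diff_right)
  also have "\<dots> \<le> norm (\<psi> (d v) - \<psi> zs) * norm (mu \<phi> q - m)" by (rule norm_cauchy_schwarz)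
  also have "\<dots> \<le> (cp + cp) * norm (m - mu \<phi> q)"
  proof -
    have "norm (\<psi> (d v) - \<psi> zs) \<le> norm (\<psi> (d v)) + norm (\<psi> zs)" by (rule norm_triangle_ineq4)
    also have "\<dots> \<le> cp + cp" unfolding cp_def by (intro add_mono norm_le_Max)
    finally show ?thesis by (simp add: norm_minus_commute mult_right_mono)
  qed
  finally show ?thesis by (simp add: cp_def m_def)
qed

theorem proposition5p2:
  fixes \<psi> :: "'z::finite \<Rightarrow> 'h::euclidean_space" and \<phi> :: "'y::finite \<Rightarrow> 'h"
    and c :: real and d :: "'h \<Rightarrow> 'z" and \<epsilon> :: real
  assumes "is_decoding \<psi> \<phi> d" and "\<epsilon> \<ge> 0"
  shows "calibration \<psi> \<phi> c d \<epsilon> \<ge>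
    ereal (\<epsilon>\<^sup>2 / (8 * (Max (range (\<lambda>z. norm (\<psi> z))))\<^sup>2 * (Max (range (\<lambda>y. norm (\<phi> y))))\<^sup>2))"
  unfolding calibration_def
proof (rule Inf_greatest, clarify)
  fix v q assume q: "is_prob q" and el: "\<epsilon> \<le> excess_loss \<psi> \<phi> c (d v) q"
  define cp where "cp = Max (range (\<lambda>z. norm (\<psi> z)))"
  define cf where "cf = Max (range (\<lambda>y. norm (\<phi> y)))"
  define g where "g = marginals \<phi> v - mu \<phi> q"
  have cp0: "cp \<ge> 0" unfolding cp_def using norm_le_Max[of \<psi> undefined] norm_ge_zero[of "\<psi> undefined"] by linarith
  have cf0: "cf \<ge> 0" unfolding cf_def using norm_le_Max[of \<phi> undefined] norm_ge_zero[of "\<phi> undefined"] by linarith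
  have "\<epsilon>\<^sup>2 / (8 * cp\<^sup>2 * cf\<^sup>2) \<le> excess_surrogate \<phi> v q"
  proof (cases "cp = 0 \<or> cf = 0")
    case True
    then have "\<epsilon>\<^sup>2 / (8 * cp\<^sup>2 * cf\<^sup>2) = 0" by auto
    moreover have "excess_surrogate \<phi> v q \<ge> 0" using es_ge[OF q, of \<phi> v v] by simp
    ultimately show ?thesis by linarith
  next
    case False
    then have cpp: "cp > 0" and cfp: "cf > 0" using cp0 cf0 by auto
    define t where "t = 1 / cf\<^sup>2"
    have t0: "t \<ge> 0" by (simp add: t_def)
    have "excess_surrogate \<phi> v q \<ge> cond_surrogate \<phi> v q - cond_surrogate \<phi> (v - t *\<^sub>R g) q"
      by (rule es_ge[OF q])
    moreover have "cond_surrogate \<phi> (v - t *\<^sub>R g) q \<le> cond_surrogate \<phi> v q - t * (norm g)\<^sup>2 + t\<^sup>2 * (cf * norm g)\<^sup>2 / 2"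
      using key[OF q t0, of \<phi> v] unfolding g_def cf_def .
    moreover have "t * (norm g)\<^sup>2 - t\<^sup>2 * (cf * norm g)\<^sup>2 / 2 = (norm g)\<^sup>2 / (2 * cf\<^sup>2)"
      using cfp by (simp add: t_def field_simps power2_eq_square)
    ultimately have S: "excess_surrogate \<phi> v q \<ge> (norm g)\<^sup>2 / (2 * cf\<^sup>2)" by linarith
    have E: "\<epsilon> \<le> 2 * cp * norm g"
      using el loss_bound[OF assms(1) q, of c v] unfolding cp_def g_def by linarith
    have "\<epsilon>\<^sup>2 \<le> (2 * cp * norm g)\<^sup>2" using E assms(2) by (intro power_mono) auto
    then have "\<epsilon>\<^sup>2 / (8 * cp\<^sup>2 * cf\<^sup>2) \<le> (2 * cp * norm g)\<^sup>2 / (8 * cp\<^sup>2 * cf\<^sup>2)"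
      using cpp cfp by (intro divide_right_mono) auto
    also have "\<dots> = (norm g)\<^sup>2 / (2 * cf\<^sup>2)" using cpp cfp by (simp add: field_simps power2_eq_square)
    finally show ?thesis using S by linarith
  qed
  then show "ereal (\<epsilon>\<^sup>2 / (8 * (Max (range (\<lambda>z. norm (\<psi> z))))\<^sup>2 * (Max (range (\<lambda>y. norm (\<phi> y))))\<^sup>2))
      \<le> ereal (excess_surrogate \<phi> v q)" by (simp add: cp_def cf_def)
qed

end
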